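(* Let $X$ be a real reflexive Banach space and let $\{F_t\}_{t \in T}$ be a non-empty family of convex existence sets in $X$ directed by inclusion, i.e. for any $t_1, t_2 \in T$ there is $t_3 \in T$ with $F_{t_1} \cup F_{t_2} \subset F_{t_3}$. Then $F = \mathrm{cl}\left(\bigcup_{t \in T} F_t\right)$ is an existence set.
   Context: For a non-empty set $F \subset X$ and $x \in X$, let $R_F(x) = \{ d \in F : \|d-c\| \le \|x-c\| \text{ for all } c \in F\}$. A non-empty set $F \subset X$ is an existence set if $R_F(x) \neq \emptyset$ for every $x \in X$. $\mathrm{cl}$ denotes norm closure. *)

theory Defs
  imports "HOL-Analysis.Analysis"
begin

text \<open>Reflexivity: the canonical embedding of X into its bidual is surjective,
  i.e. every continuous linear functional on the dual X* is evaluation at some x.\<close>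
definition reflexive_space :: "'a::real_normed_vector itself \<Rightarrow> bool" where
  "reflexive_space _ \<longleftrightarrow>
     (\<forall>\<Phi> :: ('a \<Rightarrow>\<^sub>L real) \<Rightarrow>\<^sub>L real. \<exists>x::'a. \<forall>f. blinfun_apply \<Phi> f = blinfun_apply f x)"

definition R_set :: "'a::real_normed_vector set \<Rightarrow> 'a \<Rightarrow> 'a set" where
  "R_set F x = {d \<in> F. \<forall>c\<in>F. norm (d - c) \<le> norm (x - c)}"

definition existence_set :: "'a::real_normed_vector set \<Rightarrow> bool" where
  "existence_set F \<longleftrightarrow> F \<noteq> {} \<and> (\<forall>x. R_set F x \<noteq> {})"

end

theory Submission
  imports Defs
begin

definition sublin :: "('a::real_vector \<Rightarrow> real) \<Rightarrow> bool" where
  "sublin p \<longleftrightarrow> (\<forall>x y. p (x + y) \<le> p x + p y) \<and> (\<forall>c x. c \<ge> 0 \<longrightarrow> p (c *\<^sub>R x) = c * p x)"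

definition lgraph :: "('a::real_vector \<Rightarrow> real) \<Rightarrow> 'a \<Rightarrow> ('a \<times> real) set \<Rightarrow> bool" where
  "lgraph p z G \<longleftrightarrow> (\<forall>x r s. (x,r)\<in>G \<longrightarrow> (x,s)\<in>G \<longrightarrow> r = s)
     \<and> (\<forall>x r y s. (x,r)\<in>G \<longrightarrow> (y,s)\<in>G \<longrightarrow> (x+y, r+s)\<in>G)
     \<and> (\<forall>x r c. (x,r)\<in>G \<longrightarrow> (c *\<^sub>R x, c*r)\<in>G)
     \<and> (\<forall>x r. (x,r)\<in>G \<longrightarrow> r \<le> p x) \<and> (z, p z) \<in> G"

lemma sublin_0: "sublin p \<Longrightarrow> p 0 = 0"
  unfolding sublin_def by (metis mult_zero_left order_refl scale_zero_left)

lemma sublin_neg: "sublin p \<Longrightarrow> - p x \<le> p (- x)"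
  using sublin_0[of p] unfolding sublin_def by (metis add.right_inverse neg_le_iff_le add.commute le_diff_eq diff_minus_eq_add  minus_diff_eq  add_0 diff_0)

lemma lgraph_init:
  assumes "sublin p"
  shows "lgraph p z {(t *\<^sub>R z, t * p z) | t. True}"
proof -
  have p0: "p 0 = 0" using sublin_0[OF assms] .
  have hom: "\<And>c x. c \<ge> 0 \<Longrightarrow> p (c *\<^sub>R x) = c * p x" using assms unfolding sublin_def by blast
  have bnd: "t * p z \<le> p (t *\<^sub>R z)" for t
  proof (cases "t \<ge> 0")
    case True then show ?thesis using hom by simp
  next
    case False
    have "p (t *\<^sub>R z) = (-t) * p (- z)" using hom[of "-t" "-z"] False by simp
    moreover have "- p z \<le> p (-z)" using sublin_neg[OF assms] .
    ultimately show ?thesis using False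
      by (metis mult_left_mono mult_minus_right neg_0_le_iff_le linorder_not_le less_imp_le mult.commute minus_mult_minus)
  qed
  have func: "r = s" if "t *\<^sub>R z = u *\<^sub>R z" "r = t * p z" "s = u * p z" for t u r s
  proof (cases "t = u")
    case False
    then have "z = 0" using that(1) by (metis scaleR_cancel_right)
    then show ?thesis using that p0 by simp
  qed (use that in simp)
  show ?thesis unfolding lgraph_def
  proof (intro conjI allI impI)
    show "(z, p z) \<in> {(t *\<^sub>R z, t * p z) |t. True}" by (auto intro!: exI[of _ 1])
  next
    fix x r s assume "(x, r) \<in> {(t *\<^sub>R z, t * p z) |t. True}" "(x, s) \<in> {(t *\<^sub>R z, t * p z) |t. True}"
    then show "r = s" using func by auto
  next
    fix x r y s assume "(x, r) \<in> {(t *\<^sub>R z, t * p z) |t. True}" "(y, s) \<in> {(t *\<^sub>R z, t * p z) |t. True}"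
    then obtain t u where "x = t *\<^sub>R z" "r = t * p z" "y = u *\<^sub>R z" "s = u * p z" by auto
    then show "(x + y, r + s) \<in> {(t *\<^sub>R z, t * p z) |t. True}"
      by (auto intro!: exI[of _ "t + u"] simp: scaleR_add_left distrib_right)
  next
    fix x r c assume "(x, r) \<in> {(t *\<^sub>R z, t * p z) |t. True}"
    then obtain t where "x = t *\<^sub>R z" "r = t * p z" by auto
    then show "(c *\<^sub>R x, c * r) \<in> {(t *\<^sub>R z, t * p z) |t. True}"
      by (auto intro!: exI[of _ "c * t"])
  next
    fix x r assume "(x, r) \<in> {(t *\<^sub>R z, t * p z) |t. True}"
    then show "r \<le> p x" using bnd by auto
  qed
qed

lemma lgraph_extend:
  assumes sp: "sublin p" and G: "lgraph p z G" and y: "y \<notin> fst ` G"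
  shows "\<exists>G'. lgraph p z G' \<and> G \<subset> G'"
proof -
  have sub: "\<And>x y. p (x + y) \<le> p x + p y" and hom: "\<And>c x. c \<ge> 0 \<Longrightarrow> p (c *\<^sub>R x) = c * p x"
    using sp unfolding sublin_def by blast+
  have Gf: "\<And>x r s. (x,r)\<in>G \<Longrightarrow> (x,s)\<in>G \<Longrightarrow> r = s"
    and Ga: "\<And>x r y s. (x,r)\<in>G \<Longrightarrow> (y,s)\<in>G \<Longrightarrow> (x+y, r+s)\<in>G"
    and Gs: "\<And>x r c. (x,r)\<in>G \<Longrightarrow> (c *\<^sub>R x, c*r)\<in>G"
    and Gb: "\<And>x r. (x,r)\<in>G \<Longrightarrow> r \<le> p x" and Gz: "(z, p z) \<in> G"
    using G unfolding lgraph_def by blast+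
  have G0: "(0, 0) \<in> G" using Gs[OF Gz, of 0] by simp
  define S where "S = {r - p (v - y) | v r. (v, r) \<in> G}"
  have key: "r - p (v - y) \<le> p (u + y) - s" if "(v,r)\<in>G" "(u,s)\<in>G" for v r u s
  proof -
    have "r + s \<le> p (v + u)" using Gb[OF Ga[OF that]] .
    also have "\<dots> \<le> p (v - y) + p (u + y)" using sub[of "v - y" "u + y"] by simp
    finally show ?thesis by simp
  qed
  have Sne: "S \<noteq> {}" using G0 unfolding S_def by blast
  have Sbdd: "bdd_above S" unfolding S_def bdd_above_def using key[OF _ G0] by auto
  define a where "a = Sup S"
  have a_ge: "r - p (v - y) \<le> a" if "(v,r)\<in>G" for v r
    unfolding a_def using that by (intro cSup_upper[OF _ Sbdd]) (auto simp: S_def)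
  have a_le: "a \<le> p (u + y) - s" if "(u,s)\<in>G" for u s
    unfolding a_def using that key by (intro cSup_least[OF Sne]) (auto simp: S_def)
  define G' where "G' = {(x + t *\<^sub>R y, r + t * a) | x r t. (x, r) \<in> G}"
  have inG': "(x + t *\<^sub>R y, r + t * a) \<in> G'" if "(x,r)\<in>G" for x r t
    using that unfolding G'_def by blast
  have "lgraph p z G'" unfolding lgraph_def
  proof (intro conjI allI impI)
    show "(z, p z) \<in> G'" using inG'[OF Gz, of 0] by simp
  next
    fix x r s assume "(x, r) \<in> G'" "(x, s) \<in> G'"
    then obtain x1 r1 t1 x2 r2 t2 where h: "(x1,r1)\<in>G" "(x2,r2)\<in>G" "x = x1 + t1 *\<^sub>R y" "r = r1 + t1 * a"
      "x = x2 + t2 *\<^sub>R y" "s = r2 + t2 * a" unfolding G'_def by blast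
    have d: "(x1 - x2, r1 - r2) \<in> G" using Ga[OF h(1) Gs[OF h(2), of "-1"]] by simp
    have "t1 = t2"
    proof (rule ccontr)
      assume ne: "t1 \<noteq> t2"
      have "x1 - x2 = (t2 - t1) *\<^sub>R y" using h(3,5) by (simp add: algebra_simps)
      then have "y = inverse (t2 - t1) *\<^sub>R (x1 - x2)" using ne by simp
      then have "(y, inverse (t2 - t1) * (r1 - r2)) \<in> G" using Gs[OF d] by simp
      then show False using y by force
    qed
    then have "x1 = x2" using h by simp
    then have "r1 = r2" using Gf h by blast
    then show "r = s" using h \<open>t1 = t2\<close> by simp
  next
    fix x r x' s assume "(x, r) \<in> G'" "(x', s) \<in> G'"
    then obtain x1 r1 t1 x2 r2 t2 where h: "(x1,r1)\<in>G" "(x2,r2)\<in>G" "x = x1 + t1 *\<^sub>R y" "r = r1 + t1 * a"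
      "x' = x2 + t2 *\<^sub>R y" "s = r2 + t2 * a" unfolding G'_def by blast
    show "(x + x', r + s) \<in> G'" using inG'[OF Ga[OF h(1,2)], of "t1 + t2"] h
      by (simp add: algebra_simps)
  next
    fix x r c assume "(x, r) \<in> G'"
    then obtain x1 r1 t1 where h: "(x1,r1)\<in>G" "x = x1 + t1 *\<^sub>R y" "r = r1 + t1 * a"
      unfolding G'_def by blast
    show "(c *\<^sub>R x, c * r) \<in> G'" using inG'[OF Gs[OF h(1)], of c "c * t1"] h
      by (simp add: algebra_simps)
  next
    fix x r assume "(x, r) \<in> G'"
    then obtain x1 r1 t where h: "(x1,r1)\<in>G" "x = x1 + t *\<^sub>R y" "r = r1 + t * a"
      unfolding G'_def by blast
    show "r \<le> p x"
    proof (cases "t = 0")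
      case True then show ?thesis using Gb[OF h(1)] h by simp
    next
      case False
      show ?thesis
      proof (cases "t > 0")
        case True
        have "a \<le> p (inverse t *\<^sub>R x1 + y) - inverse t * r1" using a_le[OF Gs[OF h(1), of "inverse t"]] .
        then have "t * a \<le> t * p (inverse t *\<^sub>R x1 + y) - r1" using True
        proof -
          have "t * a \<le> t * (p (inverse t *\<^sub>R x1 + y) - inverse t * r1)"
            using True \<open>a \<le> _\<close> by (intro mult_left_mono) auto
          then show ?thesis using True by (simp add: right_diff_distrib mult.assoc[symmetric])
        qed
        also have "t * p (inverse t *\<^sub>R x1 + y) = p (x1 + t *\<^sub>R y)"
          using hom[of t "inverse t *\<^sub>R x1 + y"] True by (simp add: scaleR_add_right)
        finally show ?thesis using h by simp
      next
        case False2: False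
        then have tn: "-t > 0" using False by simp
        have "inverse (-t) * r1 - p (inverse (-t) *\<^sub>R x1 - y) \<le> a"
          using a_ge[OF Gs[OF h(1), of "inverse (-t)"]] .
        then have "(-t) * (inverse (-t) * r1 - p (inverse (-t) *\<^sub>R x1 - y)) \<le> (-t) * a"
          using tn by (intro mult_left_mono) auto
        then have "r1 - (-t) * p (inverse (-t) *\<^sub>R x1 - y) \<le> - t * a"
          using tn by (simp add: right_diff_distrib mult.assoc[symmetric])
        moreover have "(-t) * p (inverse (-t) *\<^sub>R x1 - y) = p (x1 + t *\<^sub>R y)"
          using hom[of "-t" "inverse (-t) *\<^sub>R x1 - y"] tn by (simp add: scaleR_diff_right)
        ultimately show ?thesis using h by simp
      qed
    qed
  qed
  moreover have "G \<subseteq> G'" using inG'[of _ _ 0] by force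
  moreover have "(y, a) \<in> G'" using inG'[OF G0, of 1] by simp
  moreover have "(y, a) \<notin> G" using y by force
  ultimately show ?thesis by blast
qed

lemma hahn_banach:
  fixes p :: "'a::real_vector \<Rightarrow> real"
  assumes sp: "sublin p"
  shows "\<exists>g. linear g \<and> (\<forall>x. g x \<le> p x) \<and> g z = p z"
proof -
  let ?A = "{G. lgraph p z G}"
  have "\<exists>M\<in>?A. \<forall>X\<in>?A. M \<subseteq> X \<longrightarrow> X = M"
  proof (rule subset_Zorn_nonempty)
    show "?A \<noteq> {}" using lgraph_init[OF sp] by blast
  next
    fix C assume Cne: "C \<noteq> {}" and ch: "subset.chain ?A C"
    have CA: "\<And>G. G \<in> C \<Longrightarrow> lgraph p z G" using ch unfolding subset.chain_def by blast
    have tot: "\<And>G H. G \<in> C \<Longrightarrow> H \<in> C \<Longrightarrow> G \<subseteq> H \<or> H \<subseteq> G"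
      using ch unfolding subset.chain_def by blast
    have two: "\<exists>G\<in>C. a \<in> G \<and> b \<in> G" if ab: "a \<in> \<Union>C" "b \<in> \<Union>C" for a b
    proof -
      obtain G H where "G \<in> C" "H \<in> C" "a \<in> G" "b \<in> H" using ab by blast
      then show ?thesis using tot[of G H] by blast
    qed
    show "\<Union>C \<in> ?A" unfolding mem_Collect_eq lgraph_def
    proof (intro conjI allI impI)
      obtain G0 where "G0 \<in> C" using Cne by blast
      then show "(z, p z) \<in> \<Union>C" using CA unfolding lgraph_def by blast
    next
      fix x r s assume "(x, r) \<in> \<Union>C" "(x, s) \<in> \<Union>C"
      then obtain G where "G \<in> C" "(x,r) \<in> G" "(x,s) \<in> G" using two by blast
      then show "r = s" using CA unfolding lgraph_def by blast
    next
      fix x r y s assume "(x, r) \<in> \<Union>C" "(y, s) \<in> \<Union>C"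
      then obtain G where "G \<in> C" "(x,r) \<in> G" "(y,s) \<in> G" using two by blast
      then show "(x + y, r + s) \<in> \<Union>C" using CA unfolding lgraph_def by blast
    next
      fix x r c assume "(x, r) \<in> \<Union>C"
      then obtain G where "G \<in> C" "(x,r) \<in> G" by blast
      then show "(c *\<^sub>R x, c * r) \<in> \<Union>C" using CA unfolding lgraph_def by blast
    next
      fix x r assume "(x, r) \<in> \<Union>C"
      then obtain G where "G \<in> C" "(x,r) \<in> G" by blast
      then show "r \<le> p x" using CA unfolding lgraph_def by blast
    qed
  qed
  then obtain M where M: "lgraph p z M" and max: "\<And>X. lgraph p z X \<Longrightarrow> M \<subseteq> X \<Longrightarrow> X = M" by blast
  have dom: "\<exists>r. (x, r) \<in> M" for x
  proof (rule ccontr)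
    assume "\<nexists>r. (x, r) \<in> M"
    then have "x \<notin> fst ` M" by force
    from lgraph_extend[OF sp M this] obtain G' where "lgraph p z G'" "M \<subset> G'" by blast
    then show False using max by blast
  qed
  have Mf: "\<And>x r s. (x,r)\<in>M \<Longrightarrow> (x,s)\<in>M \<Longrightarrow> r = s"
    and Ma: "\<And>x r y s. (x,r)\<in>M \<Longrightarrow> (y,s)\<in>M \<Longrightarrow> (x+y, r+s)\<in>M"
    and Ms: "\<And>x r c. (x,r)\<in>M \<Longrightarrow> (c *\<^sub>R x, c*r)\<in>M"
    and Mb: "\<And>x r. (x,r)\<in>M \<Longrightarrow> r \<le> p x" and Mz: "(z, p z) \<in> M"
    using M unfolding lgraph_def by blast+
  define g where "g x = (THE r. (x, r) \<in> M)" for x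
  have gM: "(x, g x) \<in> M" for x
    unfolding g_def using dom[of x] Mf by (metis theI)
  have geq: "(x, r) \<in> M \<Longrightarrow> g x = r" for x r using gM Mf by blast
  have "linear g"
  proof (rule linearI)
    show "g (b1 + b2) = g b1 + g b2" for b1 b2 using geq[OF Ma[OF gM gM]] .
    show "g (r *\<^sub>R b) = r *\<^sub>R g b" for r b using geq[OF Ms[OF gM]] by simp
  qed
  moreover have "\<forall>x. g x \<le> p x" using Mb gM by blast
  moreover have "g z = p z" using geq[OF Mz] .
  ultimately show ?thesis by blast
qed

lemma infdist_geI:
  assumes "A \<noteq> {}" "\<And>a. a \<in> A \<Longrightarrow> e \<le> dist x a"
  shows "e \<le> infdist x A"
  using assms by (simp add: infdist_notempty cINF_greatest)

lemma infdist_cone_sublin: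
  fixes K :: "'a::real_normed_vector set"
  assumes K0: "0 \<in> K" and Kadd: "\<And>a b. a \<in> K \<Longrightarrow> b \<in> K \<Longrightarrow> a + b \<in> K"
    and Ksc: "\<And>t a. t \<ge> 0 \<Longrightarrow> a \<in> K \<Longrightarrow> t *\<^sub>R a \<in> K"
  shows "sublin (\<lambda>y. infdist y K)"
  unfolding sublin_def
proof (intro conjI allI impI)
  have Kne: "K \<noteq> {}" using K0 by blast
  fix x y :: 'a
  have "infdist (x + y) K - infdist x K \<le> dist y k2" if k2: "k2 \<in> K" for k2
  proof -
    have "infdist (x + y) K - dist y k2 \<le> dist x k1" if k1: "k1 \<in> K" for k1
    proof -
      have "infdist (x + y) K \<le> dist (x + y) (k1 + k2)" using infdist_le[OF Kadd[OF k1 k2]] .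
      also have "\<dots> \<le> dist x k1 + dist y k2"
        by (simp add: dist_norm) (metis add_diff_add norm_triangle_ineq)
      finally show ?thesis by simp
    qed
    then have "infdist (x + y) K - dist y k2 \<le> infdist x K" by (intro infdist_geI[OF Kne])
    then show ?thesis by simp
  qed
  then have "infdist (x + y) K - infdist x K \<le> infdist y K" by (intro infdist_geI[OF Kne])
  then show "infdist (x + y) K \<le> infdist x K + infdist y K" by simp
next
  have Kne: "K \<noteq> {}" using K0 by blast
  fix c :: real and x :: 'a assume c: "0 \<le> c"
  show "infdist (c *\<^sub>R x) K = c * infdist x K"
  proof (cases "c = 0")
    case True then show ?thesis using K0 by simp
  next
    case False
    then have cp: "c > 0" using c by simp
    have le1: "infdist (s *\<^sub>R u) K \<le> s * infdist u K" if sp: "s > 0" for s u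
    proof -
      have "infdist (s *\<^sub>R u) K / s \<le> dist u k" if "k \<in> K" for k
      proof -
        have "infdist (s *\<^sub>R u) K \<le> dist (s *\<^sub>R u) (s *\<^sub>R k)" using infdist_le[OF Ksc[OF _ that]] sp by simp
        also have "\<dots> = s * dist u k" using sp by (simp add: dist_norm scaleR_diff_right[symmetric])
        finally show ?thesis using sp by (simp add: divide_le_eq mult.commute)
      qed
      then have "infdist (s *\<^sub>R u) K / s \<le> infdist u K" by (intro infdist_geI[OF Kne])
      then show ?thesis using sp by (simp add: divide_le_eq mult.commute)
    qed
    have "infdist x K = infdist (inverse c *\<^sub>R (c *\<^sub>R x)) K" using cp by simp
    also have "\<dots> \<le> inverse c * infdist (c *\<^sub>R x) K" using le1[of "inverse c" "c *\<^sub>R x"] cp by simp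
    finally have "c * infdist x K \<le> infdist (c *\<^sub>R x) K" using cp
      by (simp add: field_simps)
    then show ?thesis using le1[OF cp, of x] by simp
  qed
qed

lemma separation:
  fixes C :: "'a::real_normed_vector set"
  assumes clC: "closed C" and cvC: "convex C" and neC: "C \<noteq> {}" and dC: "d \<notin> C"
  shows "\<exists>(g::'a \<Rightarrow> real) \<alpha>. bounded_linear g \<and> (\<forall>c\<in>C. g c \<le> \<alpha>) \<and> \<alpha> < g d"
proof -
  define \<delta> where "\<delta> = infdist d C"
  have dpos: "\<delta> > 0" unfolding \<delta>_def using infdist_pos_not_in_closed[OF clC neC dC] .
  obtain c0 where c0: "c0 \<in> C" using neC by blast
  define K where "K = {t *\<^sub>R (c + w - d) | t c w. t \<ge> 0 \<and> c \<in> C \<and> norm w < \<delta>/2}"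
  have K0: "0 \<in> K"
  proof -
    have "(0::'a) = 0 *\<^sub>R (c0 + 0 - d)" by simp
    moreover have "norm (0::'a) < \<delta>/2" using dpos by simp
    ultimately show ?thesis unfolding K_def using c0 by blast
  qed
  have Ksc: "t *\<^sub>R a \<in> K" if "t \<ge> 0" "a \<in> K" for t a
  proof -
    from that(2) obtain s c w where "a = s *\<^sub>R (c + w - d)" "s \<ge> 0" "c \<in> C" "norm w < \<delta>/2"
      unfolding K_def by blast
    moreover have "t *\<^sub>R a = (t * s) *\<^sub>R (c + w - d)" using calculation by simp
    moreover have "t * s \<ge> 0" using that(1) calculation by simp
    ultimately show ?thesis unfolding K_def by blast
  qed
  have Kadd: "a + b \<in> K" if "a \<in> K" "b \<in> K" for a b
  proof -
    from that obtain t1 c1 w1 t2 c2 w2 where h: "a = t1 *\<^sub>R (c1 + w1 - d)" "t1 \<ge> 0" "c1 \<in> C" "norm w1 < \<delta>/2"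
      "b = t2 *\<^sub>R (c2 + w2 - d)" "t2 \<ge> 0" "c2 \<in> C" "norm w2 < \<delta>/2"
      unfolding K_def by blast
    show ?thesis
    proof (cases "t1 + t2 = 0")
      case True then have "t1 = 0" "t2 = 0" using h by auto
      then show ?thesis using h K0 by simp
    next
      case False
      then have tp: "t1 + t2 > 0" using h by simp
      define u1 where "u1 = t1 / (t1 + t2)"
      define u2 where "u2 = t2 / (t1 + t2)"
      have u: "u1 \<ge> 0" "u2 \<ge> 0" "u1 + u2 = 1" using tp h unfolding u1_def u2_def by (auto simp: add_divide_distrib[symmetric])
      have cC: "u1 *\<^sub>R c1 + u2 *\<^sub>R c2 \<in> C" using convexD[OF cvC h(3) h(7) u] .
      have "norm (u1 *\<^sub>R w1 + u2 *\<^sub>R w2) \<le> u1 * norm w1 + u2 * norm w2"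
        using norm_triangle_ineq[of "u1 *\<^sub>R w1" "u2 *\<^sub>R w2"] u by simp
      also have "\<dots> < u1 * (\<delta>/2) + u2 * (\<delta>/2)"
      proof -
        have n1: "norm w1 \<le> \<delta>/2" "norm w2 \<le> \<delta>/2" using h(4) h(8) by linarith+
        have "u1 * norm w1 \<le> u1 * (\<delta>/2)" using mult_left_mono[OF n1(1) u(1)] .
        moreover have "u2 * norm w2 \<le> u2 * (\<delta>/2)" using mult_left_mono[OF n1(2) u(2)] .
        moreover have "u1 > 0 \<or> u2 > 0" using u by auto
        moreover have "u1 > 0 \<Longrightarrow> u1 * norm w1 < u1 * (\<delta>/2)" using h by simp
        moreover have "u2 > 0 \<Longrightarrow> u2 * norm w2 < u2 * (\<delta>/2)" using h by simp
        ultimately show ?thesis by linarith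
      qed
      also have "\<dots> = \<delta>/2" using u by (simp add: distrib_right[symmetric])
      finally have wn: "norm (u1 *\<^sub>R w1 + u2 *\<^sub>R w2) < \<delta>/2" .
      have e1: "(t1 + t2) * u1 = t1" "(t1 + t2) * u2 = t2" using tp by (simp_all add: u1_def u2_def)
      have "(t1 + t2) *\<^sub>R ((u1 *\<^sub>R c1 + u2 *\<^sub>R c2) + (u1 *\<^sub>R w1 + u2 *\<^sub>R w2) - d)
          = t1 *\<^sub>R c1 + t2 *\<^sub>R c2 + (t1 *\<^sub>R w1 + t2 *\<^sub>R w2) - (t1 *\<^sub>R d + t2 *\<^sub>R d)"
        by (simp only: scaleR_add_right scaleR_diff_right scaleR_scaleR e1 scaleR_add_left)
      also have "\<dots> = a + b" unfolding h(1) h(5) by (simp add: algebra_simps)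
      finally have "a + b = (t1 + t2) *\<^sub>R ((u1 *\<^sub>R c1 + u2 *\<^sub>R c2) + (u1 *\<^sub>R w1 + u2 *\<^sub>R w2) - d)" by simp
      moreover have "t1 + t2 \<ge> 0" using tp by simp
      ultimately show ?thesis unfolding K_def using cC wn by blast
    qed
  qed
  define p where "p y = infdist y K" for y
  have sp: "sublin p" unfolding p_def by (rule infdist_cone_sublin[OF K0 Kadd Ksc])
  define z where "z = d - c0"
  obtain g where g: "linear g" "\<And>x. g x \<le> p x" "g z = p z" using hahn_banach[OF sp, of z] by blast
  have pn: "p y \<le> norm y" for y unfolding p_def using infdist_le[OF K0, of y] by simp
  have gadd: "g (x + y) = g x + g y" and gsc: "g (r *\<^sub>R x) = r * g x" for x y r
    using g(1) unfolding linear_iff by auto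
  have bl: "bounded_linear g"
  proof (rule bounded_linear_intro[where K=1])
    show "g (x + y) = g x + g y" for x y by (rule gadd)
    show "g (r *\<^sub>R x) = r *\<^sub>R g x" for r x using gsc by simp
    show "norm (g x) \<le> norm x * 1" for x
    proof -
      have "g x \<le> norm x" using g(2) pn order_trans by blast
      moreover have "- g x \<le> norm x" using g(2)[of "-x"] pn[of "-x"] gsc[of "-1" x] by simp
      ultimately show ?thesis by simp
    qed
  qed
  have pz: "\<delta> \<le> p z" unfolding p_def
  proof (rule infdist_geI)
    show "K \<noteq> {}" using K0 by blast
  next
    fix k assume "k \<in> K"
    then obtain t c w where h: "k = t *\<^sub>R (c + w - d)" "t \<ge> 0" "c \<in> C" "norm w < \<delta>/2"
      unfolding K_def by blast
    define c' where "c' = (1 / (1 + t)) *\<^sub>R c0 + (t / (1 + t)) *\<^sub>R c"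
    have c'C: "c' \<in> C" unfolding c'_def
      using convexD[OF cvC c0 h(3), of "1/(1+t)" "t/(1+t)"] h(2) by (simp add: field_simps)
    have tt: "(1 + t) * (1 / (1 + t)) = 1" "(1 + t) * (t / (1 + t)) = t" using h(2) by auto
    have c'e: "(1 + t) *\<^sub>R c' = c0 + t *\<^sub>R c"
      unfolding c'_def scaleR_add_right scaleR_scaleR tt by simp
    have eq: "z - k = (1 + t) *\<^sub>R (d - c') - t *\<^sub>R w"
    proof -
      have "(1 + t) *\<^sub>R (d - c') - t *\<^sub>R w = (1 + t) *\<^sub>R d - (c0 + t *\<^sub>R c) - t *\<^sub>R w"
        by (simp only: scaleR_diff_right c'e)
      also have "\<dots> = d - c0 - t *\<^sub>R (c + w - d)"
        by (simp add: scaleR_add_left scaleR_diff_right scaleR_add_right)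
      finally show ?thesis unfolding z_def h(1) by simp
    qed
    have "\<delta> \<le> dist d c'" unfolding \<delta>_def using infdist_le[OF c'C] .
    then have "(1 + t) * \<delta> \<le> norm ((1 + t) *\<^sub>R (d - c'))" using h(2) mult_left_mono[of \<delta> "dist d c'" "1 + t"]
      by (simp add: dist_norm)
    moreover have "norm (t *\<^sub>R w) \<le> t * (\<delta>/2)" using h mult_left_mono[of "norm w" "\<delta>/2" t] by simp
    moreover have "norm ((1 + t) *\<^sub>R (d - c')) - norm (t *\<^sub>R w) \<le> norm (z - k)"
      unfolding eq by (rule norm_triangle_ineq2)
    ultimately have "(1 + t) * \<delta> - t * (\<delta>/2) \<le> norm (z - k)" by linarith
    moreover have "\<delta> \<le> (1 + t) * \<delta> - t * (\<delta>/2)"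
    proof -
      have "0 \<le> t * \<delta>" using h(2) dpos by simp
      moreover have "(1 + t) * \<delta> = \<delta> + t * \<delta>" by (simp add: distrib_right)
      ultimately show ?thesis by linarith
    qed
    ultimately show "\<delta> \<le> dist z k" by (simp add: dist_norm)
  qed
  have zn: "norm z \<ge> \<delta>" using pz pn[of z] by simp
  then have znp: "norm z > 0" using dpos by linarith
  define s where "s = \<delta> / (4 * norm z)"
  have s: "s > 0" unfolding s_def using dpos znp by simp
  have snz: "s * norm z = \<delta> / 4" unfolding s_def using znp by simp
  have w0: "norm (- (s *\<^sub>R z)) < \<delta>/2" using snz s dpos by simp
  have gw0: "g (s *\<^sub>R z) \<ge> s * \<delta>"
  proof -
    have "g (s *\<^sub>R z) = s * p z" using gsc[of s z] g(3) by simp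
    moreover have "s * \<delta> \<le> s * p z" using pz s by (intro mult_left_mono) auto
    ultimately show ?thesis by simp
  qed
  have w0': "norm (s *\<^sub>R z) < \<delta>/2" using w0 by simp
  have "g c \<le> g d - s * \<delta>" if cC: "c \<in> C" for c
  proof -
    have "c + s *\<^sub>R z - d = 1 *\<^sub>R (c + s *\<^sub>R z - d)" by simp
    moreover have "(0::real) \<le> 1" by simp
    ultimately have kK: "c + s *\<^sub>R z - d \<in> K" unfolding K_def using cC w0' by blast
    have "g (c + s *\<^sub>R z - d) \<le> 0" using g(2)[of "c + s *\<^sub>R z - d"] kK unfolding p_def by simp
    moreover have "g (c + s *\<^sub>R z - d) = g c + g (s *\<^sub>R z) - g d"
      using linear_diff[OF g(1)] gadd by simp
    ultimately have "g c + g (s *\<^sub>R z) - g d \<le> 0" by simp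
    then show ?thesis using gw0 by linarith
  qed
  moreover have "g d - s * \<delta> < g d" using s dpos by simp
  ultimately show ?thesis using bl by (intro exI[of _ g] exI[of _ "g d - s * \<delta>"]) blast
qed

lemma ultrafilter_exists:
  fixes N :: "'i filter"
  assumes "N \<noteq> bot"
  shows "\<exists>U. U \<noteq> bot \<and> U \<le> N \<and> (\<forall>P. eventually P U \<or> eventually (\<lambda>x. \<not> P x) U)"
proof -
  define A where "A = {G. G \<noteq> bot \<and> G \<le> N}"
  have po: "partial_order_on A (relation_of (\<lambda>a b. b \<le> a) A)"
    by (rule partial_order_on_relation_ofI) auto
  have "\<exists>m\<in>A. \<forall>a\<in>A. a \<le> m \<longrightarrow> a = m"
  proof (rule predicate_Zorn[OF po])
    fix C assume C: "C \<in> Chains (relation_of (\<lambda>a b. b \<le> a) A)"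
    have CA: "C \<subseteq> A" and comp: "\<And>a b. a \<in> C \<Longrightarrow> b \<in> C \<Longrightarrow> a \<le> b \<or> b \<le> a"
      using C unfolding Chains_def relation_of_def by auto
    show "\<exists>u\<in>A. \<forall>a\<in>C. u \<le> a"
    proof (cases "C = {}")
      case True then show ?thesis using assms by (auto simp: A_def)
    next
      case False
      have ev: "eventually P (Inf C) \<longleftrightarrow> (\<exists>b\<in>C. eventually P b)" for P
      proof (rule eventually_Inf_base[OF False])
        fix F G
        assume FG: "F \<in> C" "G \<in> C"
        show "\<exists>x\<in>C. x \<le> inf F G"
        proof (cases "F \<le> G")
          case True then show ?thesis using FG by (intro bexI[of _ F]) auto
        next
          case False then have "G \<le> F" using comp FG by blast
          then show ?thesis using FG by (intro bexI[of _ G]) auto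
        qed
      qed
      have "Inf C \<noteq> bot"
      proof
        assume "Inf C = bot"
        then have "eventually (\<lambda>x. False) (Inf C)" by simp
        then obtain b where "b \<in> C" "eventually (\<lambda>x. False) b" using ev by blast
        then show False using CA by (auto simp: A_def eventually_False)
      qed
      moreover have "Inf C \<le> N"
      proof -
        obtain c where c: "c \<in> C" using False by blast
        then have "c \<le> N" using CA by (auto simp: A_def)
        then show ?thesis using Inf_lower2[OF c] by blast
      qed
      ultimately show ?thesis by (auto simp: A_def intro: Inf_lower)
    qed
  qed
  then obtain U where U: "U \<noteq> bot" "U \<le> N" and max: "\<And>G. G \<noteq> bot \<Longrightarrow> G \<le> N \<Longrightarrow> G \<le> U \<Longrightarrow> G = U"
    unfolding A_def by blast
  have "eventually P U \<or> eventually (\<lambda>x. \<not> P x) U" for P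
  proof (rule disjCI)
    assume np: "\<not> eventually (\<lambda>x. \<not> P x) U"
    define G where "G = inf U (principal {x. P x})"
    have "G \<noteq> bot"
    proof
      assume "G = bot"
      then have "eventually (\<lambda>x. False) G" by simp
      then have "eventually (\<lambda>x. x \<in> {x. P x} \<longrightarrow> False) U" unfolding G_def eventually_inf_principal .
      then show False using np by simp
    qed
    moreover have "G \<le> U" unfolding G_def by simp
    ultimately have "G = U" using max[of G] order_trans[OF _ U(2), of G] by blast
    moreover have "eventually P G" unfolding G_def eventually_inf_principal by simp
    ultimately show "eventually P U" by simp
  qed
  then show ?thesis using U by blast
qed

lemma ultra_lim:
  fixes h :: "'i \<Rightarrow> real"
  assumes Ub: "U \<noteq> bot" and ultra: "\<forall>P. eventually P U \<or> eventually (\<lambda>x. \<not> P x) U"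
    and bd: "eventually (\<lambda>t. \<bar>h t\<bar> \<le> M) U"
  shows "\<exists>L. (h \<longlongrightarrow> L) U"
proof -
  have "compact {-M..M}" by simp
  moreover have "filtermap h U \<noteq> bot" using Ub by (simp add: filtermap_bot_iff)
  moreover have "eventually (\<lambda>y. y \<in> {-M..M}) (filtermap h U)"
    unfolding eventually_filtermap using bd by (rule eventually_mono) auto
  ultimately obtain L where L: "inf (nhds L) (filtermap h U) \<noteq> bot"
    unfolding compact_filter by blast
  have "(h \<longlongrightarrow> L) U"
  proof (rule topological_tendstoI)
    fix S :: "real set" assume S: "open S" "L \<in> S"
    show "eventually (\<lambda>t. h t \<in> S) U"
    proof (rule ccontr)
      assume "\<not> eventually (\<lambda>t. h t \<in> S) U"
      then have "eventually (\<lambda>t. \<not> h t \<in> S) U" using ultra by blast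
      then have e1: "eventually (\<lambda>y. y \<notin> S) (filtermap h U)" unfolding eventually_filtermap .
      have e2: "eventually (\<lambda>y. y \<in> S) (nhds L)" using S by (rule eventually_nhds_in_open)
      have "eventually (\<lambda>y. False) (inf (nhds L) (filtermap h U))"
        unfolding eventually_inf using e1 e2 by blast
      then show False using L by (simp add: eventually_False)
    qed
  qed
  then show ?thesis by blast
qed

theorem lemma13:
  fixes F :: "'i \<Rightarrow> 'a::banach set" and T :: "'i set"
  assumes "reflexive_space TYPE('a)"
    and "T \<noteq> {}"
    and "\<And>t. t \<in> T \<Longrightarrow> convex (F t) \<and> existence_set (F t)"
    and "\<And>t1 t2. t1 \<in> T \<Longrightarrow> t2 \<in> T \<Longrightarrow> \<exists>t3\<in>T. F t1 \<union> F t2 \<subseteq> F t3"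
  shows "existence_set (closure (\<Union>t\<in>T. F t))"
proof -
  note refl = assms(1) and Tne = assms(2) and FT = assms(3) and dir = assms(4)
  define FF where "FF = closure (\<Union>t\<in>T. F t)"
  have cvx: "convex (\<Union>t\<in>T. F t)"
  proof (rule convexI)
    fix x y and u v :: real assume x: "x \<in> (\<Union>t\<in>T. F t)" and y: "y \<in> (\<Union>t\<in>T. F t)" and uv: "0 \<le> u" "0 \<le> v" "u + v = 1"
    obtain t1 t2 where "t1 \<in> T" "t2 \<in> T" "x \<in> F t1" "y \<in> F t2" using x y by blast
    then obtain t3 where "t3 \<in> T" "x \<in> F t3" "y \<in> F t3" using dir by blast
    then show "u *\<^sub>R x + v *\<^sub>R y \<in> (\<Union>t\<in>T. F t)" using FT[of t3] convexD[of "F t3" x y u v] uv by blast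
  qed
  have cvxF: "convex FF" unfolding FF_def by (rule convex_closure[OF cvx])
  have clF: "closed FF" unfolding FF_def by simp
  obtain t0 where t0: "t0 \<in> T" using Tne by blast
  obtain c0 where c0: "c0 \<in> F t0" using FT[OF t0] unfolding existence_set_def by blast
  have sub: "F t \<subseteq> FF" if "t \<in> T" for t
  proof -
    have "F t \<subseteq> (\<Union>t\<in>T. F t)" using that by (rule UN_upper)
    then show ?thesis unfolding FF_def using closure_subset by (rule order_trans)
  qed
  have neF: "FF \<noteq> {}" using sub[OF t0] c0 by blast
  show ?thesis unfolding FF_def[symmetric] existence_set_def
  proof (intro conjI allI)
    show "FF \<noteq> {}" by (rule neF)
    fix x
    define N where "N = (INF s\<in>T. principal {t\<in>T. F s \<subseteq> F t})"
    have evN: "eventually P N \<longleftrightarrow> (\<exists>s\<in>T. eventually P (principal {t\<in>T. F s \<subseteq> F t}))" for P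
      unfolding N_def
    proof (rule eventually_INF_base[OF Tne])
      fix a b assume ab: "a \<in> T" "b \<in> T"
      then obtain c where c: "c \<in> T" "F a \<union> F b \<subseteq> F c" using dir by blast
      have ac: "F a \<subseteq> F c" and bc: "F b \<subseteq> F c" using c(2) by auto
      have "{t\<in>T. F c \<subseteq> F t} \<subseteq> {t\<in>T. F a \<subseteq> F t} \<inter> {t\<in>T. F b \<subseteq> F t}"
      proof
        fix t assume "t \<in> {t\<in>T. F c \<subseteq> F t}"
        then have tT: "t \<in> T" and ct: "F c \<subseteq> F t" by auto
        have "F a \<subseteq> F t" using subset_trans[OF ac ct] .
        moreover have "F b \<subseteq> F t" using subset_trans[OF bc ct] .
        ultimately show "t \<in> {t\<in>T. F a \<subseteq> F t} \<inter> {t\<in>T. F b \<subseteq> F t}" using tT by simp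
      qed
      then have "principal {t\<in>T. F c \<subseteq> F t} \<le> inf (principal {t\<in>T. F a \<subseteq> F t}) (principal {t\<in>T. F b \<subseteq> F t})"
        unfolding inf_principal principal_le_iff .
      then show "\<exists>x\<in>T. principal {t\<in>T. F x \<subseteq> F t} \<le> inf (principal {t\<in>T. F a \<subseteq> F t}) (principal {t\<in>T. F b \<subseteq> F t})"
        using c(1) by blast
    qed
    have evN': "eventually P N" if "s \<in> T" "\<And>t. t \<in> T \<Longrightarrow> F s \<subseteq> F t \<Longrightarrow> P t" for P s
      using that unfolding evN eventually_principal by blast
    have Nbot: "N \<noteq> bot"
    proof
      assume "N = bot"
      then have "eventually (\<lambda>x. False) N" by simp
      then show False unfolding evN eventually_principal by blast
    qed
    obtain U where U: "U \<noteq> bot" "U \<le> N" and ultra: "\<forall>P. eventually P U \<or> eventually (\<lambda>x. \<not> P x) U"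
      using ultrafilter_exists[OF Nbot] by blast
    have evU: "eventually P U" if "s \<in> T" "\<And>t. t \<in> T \<Longrightarrow> F s \<subseteq> F t \<Longrightarrow> P t" for P s
      using filter_leD[OF U(2) evN'[OF that]] .
    define dd where "dd t = (SOME y. y \<in> R_set (F t) x)" for t
    have ddR: "dd t \<in> F t \<and> (\<forall>c\<in>F t. norm (dd t - c) \<le> norm (x - c))" if "t \<in> T" for t
    proof -
      have "\<exists>y. y \<in> R_set (F t) x" using FT[OF that] unfolding existence_set_def by blast
      then have "dd t \<in> R_set (F t) x" unfolding dd_def by (rule someI_ex)
      then show ?thesis unfolding R_set_def by blast
    qed
    have key: "eventually (\<lambda>t. dd t \<in> FF \<and> norm (dd t - c) \<le> norm (x - c)) U"
      if "s \<in> T" "c \<in> F s" for s c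
      using that ddR sub by (intro evU[OF that(1)]) blast
    define M where "M = norm c0 + norm (x - c0)"
    have bdd: "eventually (\<lambda>t. norm (dd t) \<le> M) U"
    proof (rule eventually_mono[OF key[OF t0 c0]])
      fix t assume "dd t \<in> FF \<and> norm (dd t - c0) \<le> norm (x - c0)"
      moreover have "norm (dd t) \<le> norm (dd t - c0) + norm c0" using norm_triangle_sub[of "dd t" c0] by simp
      ultimately show "norm (dd t) \<le> M" unfolding M_def by linarith
    qed
    have M0: "M \<ge> 0" unfolding M_def by simp
    define \<phi> where "\<phi> f = Lim U (\<lambda>t. blinfun_apply f (dd t))" for f :: "'a \<Rightarrow>\<^sub>L real"
    have fbd: "eventually (\<lambda>t. \<bar>blinfun_apply f (dd t)\<bar> \<le> norm f * M) U" for f :: "'a \<Rightarrow>\<^sub>L real"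
    proof (rule eventually_mono[OF bdd])
      fix t assume "norm (dd t) \<le> M"
      then have "norm f * norm (dd t) \<le> norm f * M" by (intro mult_left_mono) auto
      moreover have "norm (blinfun_apply f (dd t)) \<le> norm f * norm (dd t)" by (rule norm_blinfun)
      ultimately show "\<bar>blinfun_apply f (dd t)\<bar> \<le> norm f * M" by simp
    qed
    have lim: "((\<lambda>t. blinfun_apply f (dd t)) \<longlongrightarrow> \<phi> f) U" for f
    proof -
      obtain L where L: "((\<lambda>t. blinfun_apply f (dd t)) \<longlongrightarrow> L) U"
        using ultra_lim[OF U(1) ultra fbd[of f]] by blast
      moreover have "\<phi> f = L" unfolding \<phi>_def using U(1) L by (intro tendsto_Lim) auto
      ultimately show ?thesis by simp
    qed
    have bl: "bounded_linear \<phi>"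
    proof (rule bounded_linear_intro[where K=M])
      fix f g :: "'a \<Rightarrow>\<^sub>L real"
      have "((\<lambda>t. blinfun_apply (f + g) (dd t)) \<longlongrightarrow> \<phi> f + \<phi> g) U"
        unfolding plus_blinfun.rep_eq using tendsto_add[OF lim[of f] lim[of g]] by simp
      then show "\<phi> (f + g) = \<phi> f + \<phi> g" using tendsto_unique[OF U(1) lim[of "f + g"]] by blast
    next
      fix r :: real and f :: "'a \<Rightarrow>\<^sub>L real"
      have "((\<lambda>t. blinfun_apply (r *\<^sub>R f) (dd t)) \<longlongrightarrow> r *\<^sub>R \<phi> f) U"
        unfolding scaleR_blinfun.rep_eq using tendsto_scaleR[OF tendsto_const lim[of f]] by simp
      then show "\<phi> (r *\<^sub>R f) = r *\<^sub>R \<phi> f" using tendsto_unique[OF U(1) lim[of "r *\<^sub>R f"]] by blast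
    next
      fix f :: "'a \<Rightarrow>\<^sub>L real"
      have "\<bar>\<phi> f\<bar> \<le> norm f * M"
        using tendsto_upperbound[OF tendsto_rabs[OF lim[of f]] fbd[of f] U(1)] .
      then show "norm (\<phi> f) \<le> norm f * M" by simp
    qed
    obtain d where d: "\<And>f. blinfun_apply (Blinfun \<phi>) f = blinfun_apply f d"
      using refl unfolding reflexive_space_def by blast
    have phid: "\<phi> f = blinfun_apply f d" for f
      using d[of f] bounded_linear_Blinfun_apply[OF bl] by simp
    have inS: "d \<in> FF \<inter> cball c (norm (x - c))" if "s \<in> T" "c \<in> F s" for s c
    proof (rule ccontr)
      let ?S = "FF \<inter> cball c (norm (x - c))"
      assume nd: "d \<notin> ?S"
      have evS: "eventually (\<lambda>t. dd t \<in> ?S) U"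
        using key[OF that] by (rule eventually_mono) (auto simp: dist_norm norm_minus_commute)
      have "?S \<noteq> {}"
      proof -
        obtain t where "dd t \<in> ?S" using eventually_happens'[OF U(1) evS] by blast
        then show ?thesis by blast
      qed
      moreover have "closed ?S" using clF by (intro closed_Int) auto
      moreover have "convex ?S" using cvxF by (intro convex_Int) auto
      ultimately obtain g :: "'a \<Rightarrow> real" and \<alpha> where g: "bounded_linear g" "\<And>y. y \<in> ?S \<Longrightarrow> g y \<le> \<alpha>" "\<alpha> < g d"
        using separation[OF _ _ _ nd] by blast
      have gB: "blinfun_apply (Blinfun g) = g" using bounded_linear_Blinfun_apply[OF g(1)] by simp
      have "eventually (\<lambda>t. blinfun_apply (Blinfun g) (dd t) \<le> \<alpha>) U"
        using evS by (rule eventually_mono) (simp add: gB g(2))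
      then have "\<phi> (Blinfun g) \<le> \<alpha>" using tendsto_upperbound[OF lim _ U(1)] by blast
      then show False using phid[of "Blinfun g"] gB g(3) by simp
    qed
    have dF: "d \<in> FF" using inS[OF t0 c0] by blast
    have "(\<Union>t\<in>T. F t) \<subseteq> {c. norm (d - c) \<le> norm (x - c)}"
      using inS by (auto simp: dist_norm norm_minus_commute)
    moreover have "closed {c. norm (d - c) \<le> norm (x - c)}"
      by (intro closed_Collect_le continuous_intros)
    ultimately have "FF \<subseteq> {c. norm (d - c) \<le> norm (x - c)}"
      unfolding FF_def by (rule closure_minimal)
    then have "d \<in> R_set FF x" unfolding R_set_def using dF by blast
    then show "R_set FF x \<noteq> {}" by blast
  qed
qed

end
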